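(* Let $\mathbf v\in\mathbb R^{n\times m}_{<0}$ with $n\ge2$. For each pair $\{i,i'\}$ of distinct agents let $\mathbf v^{\{i,i'\}}$ be the $2\times m$ matrix consisting of rows $i$ and $i'$ of $\mathbf v$. Let $\mathcal G(\mathbf v)$ be the set of all bipartite graphs $G$ on $([n],[m])$ obtained as follows: choose for every pair $\{i,i'\}$ a graph $G^{\{i,i'\}}\in\mathrm{MWW}(\mathbf v^{\{i,i'\}})$ (on agents $\{i,i'\}$ and chores $[m]$), and put an edge $(i,j)$ in $G$ iff $(i,j)$ is an edge of $G^{\{i,i'\}}$ for every $i'\ne i$. Then $|\mathcal G(\mathbf v)|\le(2m+1)^{n(n-1)/2}$ and $\mathrm{MWW}(\mathbf v)\subseteq\mathcal G(\mathbf v)$.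
   Context: For a matrix $\mathbf w\in\mathbb R^{k\times m}_{<0}$ with rows indexed by an agent set $A$ and $\tau\in\mathbb R^A_{>0}$, $G_\tau(\mathbf w)$ is the bipartite graph on $(A,[m])$ with edge $(i,j)$ iff $\tau_i|w_{i,j}|\le\tau_{i'}|w_{i',j}|$ for all $i'\in A$; $\mathrm{MWW}(\mathbf w)=\{G_\tau(\mathbf w):\tau\in\mathbb R^A_{>0}\}$. *)

theory Defs
  imports Complex_Main
begin

text \<open>A matrix w with rows indexed by an agent set A and columns (chores) {0..<m}
  is a function nat => nat => real; only entries w i j with i in A, j < m matter.\<close>

definition G_tau :: "nat set \<Rightarrow> nat \<Rightarrow> (nat \<Rightarrow> nat \<Rightarrow> real) \<Rightarrow> (nat \<Rightarrow> real) \<Rightarrow> (nat \<times> nat) set" where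
  "G_tau A m w \<tau> = {(i, j). i \<in> A \<and> j < m \<and>
      (\<forall>i'\<in>A. \<tau> i * \<bar>w i j\<bar> \<le> \<tau> i' * \<bar>w i' j\<bar>)}"

definition MWW :: "nat set \<Rightarrow> nat \<Rightarrow> (nat \<Rightarrow> nat \<Rightarrow> real) \<Rightarrow> (nat \<times> nat) set set" where
  "MWW A m w = {G_tau A m w \<tau> | \<tau>. \<forall>i\<in>A. \<tau> i > 0}"

definition pairG :: "nat \<Rightarrow> nat \<Rightarrow> (nat \<Rightarrow> nat \<Rightarrow> real) \<Rightarrow> (nat \<times> nat) set set" where
  "pairG n m v = {G. \<exists>C :: nat set \<Rightarrow> (nat \<times> nat) set.
      (\<forall>i<n. \<forall>i'<n. i \<noteq> i' \<longrightarrow> C {i, i'} \<in> MWW {i, i'} m v) \<and>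
      G = {(i, j). i < n \<and> j < m \<and> (\<forall>i'<n. i' \<noteq> i \<longrightarrow> (i, j) \<in> C {i, i'})}}"

end

theory Submission
  imports Defs "HOL-Library.FuncSet"
begin

lemma card_image_key:
  assumes "finite K" "key ` X \<subseteq> K" "\<forall>x\<in>X. \<forall>y\<in>X. key x = key y \<longrightarrow> g x = g y"
  shows "finite (g ` X) \<and> card (g ` X) \<le> card K"
proof -
  define h where "h k = g (SOME x. x \<in> X \<and> key x = k)" for k
  have eq: "g ` X = h ` (key ` X)"
  proof (rule set_eqI, rule iffI)
    fix z assume "z \<in> g ` X"
    then obtain x where x: "x \<in> X" "z = g x" by blast
    have "\<exists>y. y \<in> X \<and> key y = key x" using x by blast
    then have "(SOME y. y \<in> X \<and> key y = key x) \<in> X \<and> key (SOME y. y \<in> X \<and> key y = key x) = key x"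
      by (rule someI_ex)
    then have "h (key x) = g x" using assms(3) x unfolding h_def by metis
    then show "z \<in> h ` (key ` X)" using x by (metis imageI)
  next
    fix z assume "z \<in> h ` (key ` X)"
    then obtain x where x: "x \<in> X" "z = h (key x)" by blast
    have "\<exists>y. y \<in> X \<and> key y = key x" using x by blast
    then have "(SOME y. y \<in> X \<and> key y = key x) \<in> X"
      by (metis (mono_tags, lifting) someI_ex)
    then show "z \<in> g ` X" using x unfolding h_def by blast
  qed
  have fin: "finite (key ` X)" using assms(1,2) finite_subset by blast
  have "card (h ` (key ` X)) \<le> card (key ` X)" by (rule card_image_le[OF fin])
  also have "\<dots> \<le> card K" using assms(1,2) by (rule card_mono)
  finally show ?thesis using eq fin by simp
qed

lemma G_tau_pair:
  assumes "a \<noteq> b"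
  shows "G_tau {a,b} m v \<tau> =
    {(a,j) | j. j < m \<and> \<not> (\<tau> b * \<bar>v b j\<bar> < \<tau> a * \<bar>v a j\<bar>)} \<union>
    {(b,j) | j. j < m \<and> \<tau> b * \<bar>v b j\<bar> \<le> \<tau> a * \<bar>v a j\<bar>}"
  using assms unfolding G_tau_def by auto

lemma mono_step:
  fixes A B ta tb sa sb :: real
  assumes "A > 0" "B \<ge> 0" "ta > 0" "tb > 0" "sa > 0" "sb > 0" "ta * sb \<le> sa * tb"
  shows "tb * B < ta * A \<Longrightarrow> sb * B < sa * A"
    and "tb * B \<le> ta * A \<Longrightarrow> sb * B \<le> sa * A"
proof -
  assume h: "tb * B < ta * A"
  have "tb * (sb * B) = sb * (tb * B)" by simp
  also have "\<dots> < sb * (ta * A)" using h assms by simp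
  also have "\<dots> = (ta * sb) * A" by simp
  also have "\<dots> \<le> (sa * tb) * A" using assms by (simp add: mult_right_mono)
  also have "\<dots> = tb * (sa * A)" by simp
  finally show "sb * B < sa * A" using assms(4) by simp
next
  assume h: "tb * B \<le> ta * A"
  have "tb * (sb * B) = sb * (tb * B)" by simp
  also have "\<dots> \<le> sb * (ta * A)" using h assms by simp
  also have "\<dots> = (ta * sb) * A" by simp
  also have "\<dots> \<le> (sa * tb) * A" using assms by (simp add: mult_right_mono)
  also have "\<dots> = tb * (sa * A)" by simp
  finally show "sb * B \<le> sa * A" using assms(4) by simp
qed

lemma MWW_pair:
  assumes "a \<noteq> b" "\<forall>j<m. \<bar>v a j\<bar> > 0" "\<forall>j<m. \<bar>v b j\<bar> > 0"
  shows "finite (MWW {a,b} m v) \<and> card (MWW {a,b} m v) \<le> 2 * m + 1"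
proof -
  define X where "X = {\<tau> :: nat \<Rightarrow> real. \<forall>i\<in>{a,b}. \<tau> i > 0}"
  define S1 where "S1 \<tau> = {j. j < m \<and> \<tau> b * \<bar>v b j\<bar> < \<tau> a * \<bar>v a j\<bar>}" for \<tau> :: "nat \<Rightarrow> real"
  define S2 where "S2 \<tau> = {j. j < m \<and> \<tau> b * \<bar>v b j\<bar> \<le> \<tau> a * \<bar>v a j\<bar>}" for \<tau> :: "nat \<Rightarrow> real"
  define key where "key \<tau> = card (S1 \<tau>) + card (S2 \<tau>)" for \<tau>
  have M: "MWW {a,b} m v = (\<lambda>\<tau>. G_tau {a,b} m v \<tau>) ` X"
    unfolding MWW_def X_def by blast
  have sub1: "S1 \<tau> \<subseteq> {..<m}" and sub2: "S2 \<tau> \<subseteq> {..<m}" for \<tau>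
    unfolding S1_def S2_def by auto
  have G: "G_tau {a,b} m v \<tau> = {(a,j) | j. j < m \<and> j \<notin> S1 \<tau>} \<union> {(b,j) | j. j \<in> S2 \<tau>}" for \<tau>
    unfolding G_tau_pair[OF assms(1)] S1_def S2_def by auto
  have chain: "S1 \<tau> \<subseteq> S1 \<sigma> \<and> S2 \<tau> \<subseteq> S2 \<sigma>"
    if "\<tau> \<in> X" "\<sigma> \<in> X" "\<tau> a * \<sigma> b \<le> \<sigma> a * \<tau> b" for \<tau> \<sigma>
  proof -
    have p: "\<tau> a > 0" "\<tau> b > 0" "\<sigma> a > 0" "\<sigma> b > 0" using that unfolding X_def by auto
    have "j \<in> S1 \<sigma>" if "j \<in> S1 \<tau>" for j
    proof -
      have j: "j < m" "\<tau> b * \<bar>v b j\<bar> < \<tau> a * \<bar>v a j\<bar>" using that unfolding S1_def by auto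
      have "\<sigma> b * \<bar>v b j\<bar> < \<sigma> a * \<bar>v a j\<bar>"
        by (rule mono_step(1)[OF _ _ p(1,2,3,4) \<open>\<tau> a * \<sigma> b \<le> \<sigma> a * \<tau> b\<close> j(2)]) (use assms(2) j(1) in auto)
      then show ?thesis using j(1) unfolding S1_def by simp
    qed
    moreover have "j \<in> S2 \<sigma>" if "j \<in> S2 \<tau>" for j
    proof -
      have j: "j < m" "\<tau> b * \<bar>v b j\<bar> \<le> \<tau> a * \<bar>v a j\<bar>" using that unfolding S2_def by auto
      have "\<sigma> b * \<bar>v b j\<bar> \<le> \<sigma> a * \<bar>v a j\<bar>"
        by (rule mono_step(2)[OF _ _ p(1,2,3,4) \<open>\<tau> a * \<sigma> b \<le> \<sigma> a * \<tau> b\<close> j(2)]) (use assms(2) j(1) in auto)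
      then show ?thesis using j(1) unfolding S2_def by simp
    qed
    ultimately show ?thesis by blast
  qed
  have keyeq: "G_tau {a,b} m v \<tau> = G_tau {a,b} m v \<sigma>" if "\<tau> \<in> X" "\<sigma> \<in> X" "key \<tau> = key \<sigma>"
     and ch: "S1 \<tau> \<subseteq> S1 \<sigma> \<and> S2 \<tau> \<subseteq> S2 \<sigma>" for \<tau> \<sigma>
  proof -
    have f1: "finite (S1 \<sigma>)" "finite (S2 \<sigma>)"
      by (rule finite_subset[OF sub1], simp) (rule finite_subset[OF sub2], simp)
    have c1: "card (S1 \<tau>) \<le> card (S1 \<sigma>)" "card (S2 \<tau>) \<le> card (S2 \<sigma>)"
      using ch f1 card_mono by (meson, meson)
    have "card (S1 \<tau>) = card (S1 \<sigma>)" "card (S2 \<tau>) = card (S2 \<sigma>)"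
      using c1 that(3) unfolding key_def by linarith+
    then have "S1 \<tau> = S1 \<sigma>" "S2 \<tau> = S2 \<sigma>" using ch f1 card_subset_eq by (meson, meson)
    then show ?thesis unfolding G by simp
  qed
  have "finite ((\<lambda>\<tau>. G_tau {a,b} m v \<tau>) ` X) \<and> card ((\<lambda>\<tau>. G_tau {a,b} m v \<tau>) ` X) \<le> card {..2*m}"
  proof (rule card_image_key[where key = key])
    show "finite {..2*m}" by (rule finite_atMost)
    show "key ` X \<subseteq> {..2*m}"
    proof
      fix k assume "k \<in> key ` X"
      then obtain \<tau> where "k = key \<tau>" by (rule imageE)
      have "card (S1 \<tau>) \<le> card {..<m}" by (rule card_mono[OF _ sub1]) simp
      moreover have "card (S2 \<tau>) \<le> card {..<m}" by (rule card_mono[OF _ sub2]) simp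
      ultimately have "card (S1 \<tau>) \<le> m" "card (S2 \<tau>) \<le> m" by simp_all
      then show "k \<in> {..2*m}" using \<open>k = key \<tau>\<close> unfolding key_def by simp
    qed
    show "\<forall>x\<in>X. \<forall>y\<in>X. key x = key y \<longrightarrow> G_tau {a,b} m v x = G_tau {a,b} m v y"
    proof (intro ballI impI)
      fix x y assume xy: "x \<in> X" "y \<in> X" "key x = key y"
      show "G_tau {a,b} m v x = G_tau {a,b} m v y"
      proof (cases "x a * y b \<le> y a * x b")
        case True
        show ?thesis by (rule keyeq[OF xy chain[OF xy(1,2) True]])
      next
        case False
        then have "y a * x b \<le> x a * y b" by simp
        then show ?thesis using keyeq[OF xy(2,1) xy(3)[symmetric] chain[OF xy(2,1)]]
          by simp
      qed
    qed
  qed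
  then show ?thesis using M by simp
qed


theorem proposition2:
  fixes n m :: nat and v :: "nat \<Rightarrow> nat \<Rightarrow> real"
  assumes "n \<ge> 2"
    and "\<forall>i<n. \<forall>j<m. v i j < 0"
  shows "card (pairG n m v) \<le> (2 * m + 1) ^ (n * (n - 1) div 2)
    \<and> MWW {0..<n} m v \<subseteq> pairG n m v"
proof
  define P where "P = {p. \<exists>i i'. i < i' \<and> i' < n \<and> p = {i, i'}}"
  define F where "F C = {(i, j). i < n \<and> j < m \<and> (\<forall>i'<n. i' \<noteq> i \<longrightarrow> (i, j) \<in> C {i, i'})}"
    for C :: "nat set \<Rightarrow> (nat \<times> nat) set"
  have Psub: "P \<subseteq> {B. B \<subseteq> {..<n} \<and> card B = 2}"
  proof
    fix p assume "p \<in> P"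
    then have "\<exists>i i'. i < i' \<and> i' < n \<and> p = {i, i'}" unfolding P_def by (rule CollectD)
    then obtain i i' where ii: "i < i'" "i' < n" "p = {i, i'}" by blast
    have "card {i, i'} = 2" using ii(1) by simp
    moreover have "{i, i'} \<subseteq> {..<n}" using ii(1,2) by simp
    ultimately show "p \<in> {B. B \<subseteq> {..<n} \<and> card B = 2}" using ii(3) by simp
  qed
  have finB: "finite {B. B \<subseteq> {..<n} \<and> card B = 2}" by simp
  have finP: "finite P" by (rule finite_subset[OF Psub finB])
  have cardP: "card P \<le> n * (n - 1) div 2"
  proof -
    have "card P \<le> card {B. B \<subseteq> {..<n} \<and> card B = 2}" by (rule card_mono[OF finB Psub])
    also have "\<dots> = card {..<n::nat} choose 2" by (rule n_subsets) (rule finite_lessThan)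
    also have "\<dots> = n choose 2" by (simp only: card_lessThan)
    also have "\<dots> = n * (n - 1) div 2" by (rule choose_two)
    finally show ?thesis .
  qed
  have MP: "finite (MWW p m v) \<and> card (MWW p m v) \<le> 2 * m + 1" if "p \<in> P" for p
  proof -
    have "\<exists>i i'. i < i' \<and> i' < n \<and> p = {i, i'}" using that unfolding P_def by (rule CollectD)
    then obtain i i' where ii: "i < i'" "i' < n" "p = {i, i'}" by blast
    have "i < n" using ii(1,2) by simp
    have "\<forall>j<m. \<bar>v i j\<bar> > 0"
    proof (intro allI impI)
      fix j assume "j < m"
      then have "v i j < 0" using assms(2) \<open>i < n\<close> by blast
      then show "\<bar>v i j\<bar> > 0" by simp
    qed
    moreover have "\<forall>j<m. \<bar>v i' j\<bar> > 0"
    proof (intro allI impI)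
      fix j assume "j < m"
      then have "v i' j < 0" using assms(2) ii(2) by blast
      then show "\<bar>v i' j\<bar> > 0" by simp
    qed
    ultimately
    show ?thesis using MWW_pair[of i i' m v] ii by simp
  qed
  have inP: "{i, i'} \<in> P" if "i < n" "i' < n" "i \<noteq> i'" for i i'
  proof (cases "i < i'")
    case True
    then have "\<exists>k k'. k < k' \<and> k' < n \<and> {i, i'} = {k, k'}" using that by blast
    then show ?thesis unfolding P_def by simp
  next
    case False
    then have "i' < i" using that by simp
    then have "\<exists>k k'. k < k' \<and> k' < n \<and> {i, i'} = {k, k'}" using that by (metis insert_commute)
    then show ?thesis unfolding P_def by simp
  qed
  have sub: "pairG n m v \<subseteq> F ` (\<Pi>\<^sub>E p\<in>P. MWW p m v)"
  proof
    fix G assume "G \<in> pairG n m v"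
    then obtain C where C: "\<forall>i<n. \<forall>i'<n. i \<noteq> i' \<longrightarrow> C {i, i'} \<in> MWW {i, i'} m v"
      and G: "G = F C" unfolding pairG_def F_def by blast
    define C' where "C' = restrict C P"
    have "C' \<in> (\<Pi>\<^sub>E p\<in>P. MWW p m v)"
      unfolding C'_def P_def using C by auto
    moreover have "F C' = F C"
      unfolding F_def C'_def using inP by auto
    ultimately show "G \<in> F ` (\<Pi>\<^sub>E p\<in>P. MWW p m v)" using G by blast
  qed
  have finE: "finite (\<Pi>\<^sub>E p\<in>P. MWW p m v)" by (rule finite_PiE[OF finP]) (use MP in blast)
  have "card (pairG n m v) \<le> card (F ` (\<Pi>\<^sub>E p\<in>P. MWW p m v))"
    by (rule card_mono[OF _ sub]) (use finE in simp)
  also have "\<dots> \<le> card (\<Pi>\<^sub>E p\<in>P. MWW p m v)" by (rule card_image_le[OF finE])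
  also have "\<dots> = (\<Prod>p\<in>P. card (MWW p m v))" by (rule card_PiE[OF finP])
  also have "\<dots> \<le> (2 * m + 1) ^ (n * (n - 1) div 2)"
    by (rule prod_le_power) (use MP cardP in auto)
  finally show "card (pairG n m v) \<le> (2 * m + 1) ^ (n * (n - 1) div 2)" .
next
  show "MWW {0..<n} m v \<subseteq> pairG n m v"
  proof
    fix G assume "G \<in> MWW {0..<n} m v"
    then obtain \<tau> where \<tau>: "\<forall>i\<in>{0..<n}. \<tau> i > 0" and G: "G = G_tau {0..<n} m v \<tau>"
      unfolding MWW_def by blast
    define C where "C S = G_tau S m v \<tau>" for S
    have "\<forall>i<n. \<forall>i'<n. i \<noteq> i' \<longrightarrow> C {i, i'} \<in> MWW {i, i'} m v"
      unfolding C_def MWW_def using \<tau> by auto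
    moreover have "G = {(i, j). i < n \<and> j < m \<and> (\<forall>i'<n. i' \<noteq> i \<longrightarrow> (i, j) \<in> C {i, i'})}"
      unfolding G C_def G_tau_def by auto
    ultimately show "G \<in> pairG n m v" unfolding pairG_def by blast
  qed
qed

end
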